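(* Let $r\ge1$ and $\mu\in\mathcal P_r$. Then $\limsup_{n\to\infty} n\, d_r(\delta^{\mathbf u_n}_\bullet,\mu)>0$, unless $\mu=\delta_a$ for some $a\in\mathbb R$.
   Context: $\mathcal P$ denotes the set of Borel probability measures on $\mathbb R$; $\mathcal P_r=\{\mu\in\mathcal P:\int|x|^r{\rm d}\mu(x)<\infty\}$. For $\mu\in\mathcal P$, $F_\mu(x)=\mu(]-\infty,x])$ and $F_\mu^{-1}(t)=\sup\{x: F_\mu(x)\le t\}$, $t\in]0,1[$. $d_r(\mu,\nu)=\big(\int_0^1|F_\mu^{-1}(t)-F_\nu^{-1}(t)|^r{\rm d}t\big)^{1/r}$ on $\mathcal P_r$. With $\Xi_n=\{\mathbf x\in\mathbb R^n:x_1\le\dots\le x_n\}$ and $\delta^{\mathbf u_n}_{\mathbf x}=\frac1n\sum_{i=1}^n\delta_{x_i}$, set $d_r(\delta^{\mathbf u_n}_\bullet,\mu)=\min_{\mathbf x\in\Xi_n}d_r(\delta^{\mathbf u_n}_{\mathbf x},\mu)$ (the minimum is attained). *)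

theory Defs
  imports "HOL-Probability.Probability"
begin

definition quantile :: "real measure \<Rightarrow> real \<Rightarrow> real" where
  "quantile M t = Sup {x. cdf M x \<le> t}"

definition wass_dist :: "real \<Rightarrow> real measure \<Rightarrow> real measure \<Rightarrow> real" where
  "wass_dist r M N =
     (LINT t:{0<..<1}|lborel. \<bar>quantile M t - quantile N t\<bar> powr r) powr (1 / r)"

definition emp_measure :: "real list \<Rightarrow> real measure" where
  "emp_measure xs = measure_pmf (map_pmf (\<lambda>i. xs ! i) (pmf_of_set {..<length xs}))"

definition opt_quant_dist :: "real \<Rightarrow> nat \<Rightarrow> real measure \<Rightarrow> real" where
  "opt_quant_dist r n M =
     Inf ((\<lambda>xs. wass_dist r (emp_measure xs) M) ` {xs. length xs = n \<and> sorted xs})"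

end

theory Submission imports Defs begin

context real_distribution
begin

lemma qset_ne: assumes "0 < t" shows "{x. cdf M x \<le> t} \<noteq> {}"
proof -
  have "eventually (\<lambda>x. cdf M x < t) at_bot"
    using order_tendstoD(2)[OF cdf_lim_at_bot assms] .
  then obtain x where "cdf M x < t" using eventually_happens' trivial_limit_at_bot_linorder by blast
  then show ?thesis using less_imp_le by blast
qed

lemma qset_bdd: assumes "t < 1" shows "bdd_above {x. cdf M x \<le> t}"
proof -
  have "eventually (\<lambda>x. t < cdf M x) at_top"
    using order_tendstoD(1)[OF cdf_lim_at_top_prob assms] .
  then obtain y where y: "t < cdf M y" using eventually_happens' trivial_limit_at_top_linorder by blast
  show ?thesis
  proof (rule bdd_aboveI[of _ y])
    fix x assume "x \<in> {x. cdf M x \<le> t}"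
    then show "x \<le> y" using y cdf_nondecreasing[of y x] by (cases "x \<le> y") auto
  qed
qed

lemma quantile_upper: "0 < t \<Longrightarrow> t < 1 \<Longrightarrow> cdf M x \<le> t \<Longrightarrow> x \<le> quantile M t"
  unfolding quantile_def by (rule cSup_upper) (auto intro: qset_bdd)

lemma quantile_least: "0 < t \<Longrightarrow> t < 1 \<Longrightarrow> t < cdf M y \<Longrightarrow> quantile M t \<le> y"
  unfolding quantile_def
proof (rule cSup_least)
  assume "0 < t" "t < 1" "t < cdf M y"
  then show "{x. cdf M x \<le> t} \<noteq> {}" using qset_ne by auto
  fix x assume "x \<in> {x. cdf M x \<le> t}"
  then show "x \<le> y" using \<open>t < cdf M y\<close> cdf_nondecreasing[of y x] by (cases "x \<le> y") auto
qed

lemma quantile_less_D: "0 < t \<Longrightarrow> t < 1 \<Longrightarrow> x < quantile M t \<Longrightarrow> cdf M x \<le> t"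
proof -
  assume a: "0 < t" "t < 1" "x < quantile M t"
  then obtain y where "y \<in> {x. cdf M x \<le> t}" "x < y"
    using less_cSupD[OF qset_ne[OF a(1)]] unfolding quantile_def by blast
  then show ?thesis using cdf_nondecreasing[of x y] by auto
qed

lemma quantile_mono: "mono_on {0<..<1} (quantile M)"
proof (rule mono_onI)
  fix s t assume st: "s \<in> {0<..<1::real}" "t \<in> {0<..<1::real}" "s \<le> t"
  show "quantile M s \<le> quantile M t" unfolding quantile_def
    using st by (intro cSup_subset_mono qset_ne qset_bdd) auto
qed

lemma quantile_const_imp:
  assumes "\<And>t. 0 < t \<Longrightarrow> t < 1 \<Longrightarrow> quantile M t = a"
  shows "M = return borel a"
proof (rule cdf_unique)
  show "real_distribution M" by unfold_locales
  show "real_distribution (return borel a)"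
    by (simp add: real_distribution_def real_distribution_axioms_def prob_space_return)
  have gt: "cdf M x = 1" if "a < x" for x
  proof (rule ccontr)
    assume "cdf M x \<noteq> 1"
    then have "cdf M x < 1" using cdf_bounded_prob[of x] by auto
    define t where "t = max (1/2) (cdf M x)"
    have "0 < t" "t < 1" "cdf M x \<le> t" using \<open>cdf M x < 1\<close> by (auto simp: t_def)
    then have "x \<le> quantile M t" by (rule quantile_upper)
    then show False using assms[OF \<open>0<t\<close> \<open>t<1\<close>] that by auto
  qed
  have lt: "cdf M x = 0" if "x < a" for x
  proof -
    have "\<forall>t. 0 < t \<longrightarrow> t < 1 \<longrightarrow> cdf M x \<le> t"
      apply safe
      subgoal for t using quantile_less_D[of t x] assms[of t] \<open>x < a\<close> by auto
      done
    then have "cdf M x \<le> 0"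
    proof (rule contrapos_pp)
      assume "\<not> cdf M x \<le> 0"
      then show "\<not> (\<forall>t. 0 < t \<longrightarrow> t < 1 \<longrightarrow> cdf M x \<le> t)"
        by (auto intro!: exI[of _ "min (cdf M x / 2) (1/2)"])
    qed
    then show ?thesis using cdf_nonneg[of x] by auto
  qed
  have eqa: "cdf M a = 1"
  proof -
    have "(cdf M \<longlongrightarrow> cdf M a) (at_right a)"
      using cdf_is_right_cont[of a] by (simp add: continuous_within)
    moreover have "(cdf M \<longlongrightarrow> 1) (at_right a)"
    proof (rule tendsto_eventually)
      show "eventually (\<lambda>x. cdf M x = 1) (at_right a)"
        using eventually_at_right_less[of a] by eventually_elim (rule gt)
    qed
    ultimately show ?thesis using tendsto_unique trivial_limit_at_right_real by blast
  qed
  show "cdf M = cdf (return borel a)"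
  proof
    fix x
    have r: "cdf (return borel a) x = indicator {..x} a"
      by (simp add: cdf_def measure_return)
    show "cdf M x = cdf (return borel a) x"
      unfolding r using gt lt eqa by (cases x a rule: linorder_cases) (auto simp: indicator_def)
  qed
qed

end

abbreviation Om :: "real measure" where "Om \<equiv> restrict_space lborel {0<..<1::real}"

lemma Om_prob: "prob_space Om"
  by (auto simp add: emeasure_restrict_space space_restrict_space intro!: prob_spaceI)

lemma meas_Om_mono: "mono_on {0<..<1} (f::real\<Rightarrow>real) \<Longrightarrow> f \<in> borel_measurable Om"
  using borel_measurable_mono_on_fnc[of "{0<..<1}" f]
  by (subst measurable_cong_sets[OF sets_restrict_space_cong[OF sets_lborel] refl]) auto

context cdf_distribution
begin

lemma I_le_Q: assumes "0 < t" "t < 1" shows "I t \<le> quantile M t"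
proof (rule dense_le)
  fix x assume "x < I t"
  then have "\<not> t \<le> C x" using pseudoinverse[OF assms, of x] by auto
  then show "x \<le> quantile M t" using assms by (intro quantile_upper) auto
qed

lemma Q_le_I: assumes "0 < t" "t < t'" "t' < 1" shows "quantile M t \<le> I t'"
proof -
  have "t' \<le> C (I t')" using pseudoinverse[of t' "I t'"] assms by auto
  then show ?thesis using assms by (intro quantile_least) auto
qed

lemma AE_Q_I: "AE t in Om. quantile M t = I t"
proof -
  define S where "S = {t\<in>{0<..<1::real}. I t < quantile M t}"
  define g where "g t = (SOME r. r \<in> \<rat> \<and> I t < r \<and> r < quantile M t)" for t
  have g: "g t \<in> \<rat> \<and> I t < g t \<and> g t < quantile M t" if "t \<in> S" for t
  proof -
    have "I t < quantile M t" using that unfolding S_def by auto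
    then have "\<exists>r. r \<in> \<rat> \<and> I t < r \<and> r < quantile M t" using Rats_dense_in_real by blast
    then show ?thesis unfolding g_def by (rule someI_ex)
  qed
  have "inj_on g S"
  proof (rule inj_onI)
    fix s t assume st: "s \<in> S" "t \<in> S" "g s = g t"
    show "s = t"
    proof (rule ccontr)
      assume "s \<noteq> t"
      then consider "s < t" | "t < s" by linarith
      then show False
      proof cases
        case 1
        have "0 < s" "t < 1" using st unfolding S_def by auto
        then have "quantile M s \<le> I t" using Q_le_I[of s t] 1 by auto
        then show ?thesis using g[OF st(1)] g[OF st(2)] st(3) by linarith
      next
        case 2
        have "0 < t" "s < 1" using st unfolding S_def by auto
        then have "quantile M t \<le> I s" using Q_le_I[of t s] 2 by auto
        then show ?thesis using g[OF st(1)] g[OF st(2)] st(3) by linarith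
      qed
    qed
  qed
  moreover have "countable (g ` S)"
    using g countable_rat by (auto intro: countable_subset)
  ultimately have "countable S" using countable_image_inj_on by blast
  then have N: "S \<in> null_sets lborel" by (rule countable_imp_null_set_lborel)
  have "AE t in lborel. t \<in> {0<..<1} \<longrightarrow> quantile M t = I t"
  proof (rule AE_I'[OF N], rule subsetI)
    fix t assume "t \<in> {x \<in> space lborel. \<not> (x \<in> {0<..<1} \<longrightarrow> quantile M x = I x)}"
    then have "0 < t" "t < 1" "quantile M t \<noteq> I t" by auto
    with I_le_Q[of t] show "t \<in> S" unfolding S_def by auto
  qed
  then show ?thesis by (subst AE_restrict_space_iff) simp_all
qed

lemma integrable_quantile:
  assumes f: "f \<in> borel_measurable borel" "integrable M (f::real \<Rightarrow> real)"
  shows "integrable Om (\<lambda>t. f (quantile M t))"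
proof -
  have Im: "I \<in> measurable Om borel"
    using measurable_CI by (subst measurable_cong_sets[OF sets_restrict_space_cong[OF sets_lborel] refl])
  have "integrable (distr Om borel I) f" using distr_I_eq_M f by simp
  then have "integrable Om (\<lambda>t. f (I t))" using integrable_distr_eq[OF Im f(1)] by simp
  moreover have "(\<lambda>t. f (quantile M t)) \<in> borel_measurable Om"
    using measurable_compose[OF meas_Om_mono[OF quantile_mono] f(1)] .
  ultimately show ?thesis
    by (rule integrable_cong_AE_imp) (use AE_Q_I in \<open>auto\<close>)
qed

end

lemma cdf_emp:
  assumes "length xs = n" "0 < n"
  shows "cdf (emp_measure xs) x = card {i\<in>{..<n}. xs ! i \<le> x} / n"
proof -
  have "cdf (emp_measure xs) x = card ({..<n} \<inter> ((\<lambda>i. xs ! i) -` {..x})) / card {..<n}"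
    unfolding cdf_def emp_measure_def using assms measure_pmf_of_set[of "{..<n}" "(\<lambda>i. xs ! i) -` {..x}"] by auto
  also have "{..<n} \<inter> ((\<lambda>i. xs ! i) -` {..x}) = {i\<in>{..<n}. xs ! i \<le> x}" by auto
  finally show ?thesis by simp
qed

lemma quantile_emp:
  assumes "sorted xs" "length xs = n" "0 < n" "0 < t" "t < 1"
  shows "quantile (emp_measure xs) t = xs ! nat \<lfloor>real n * t\<rfloor>"
proof -
  define k where "k = nat \<lfloor>real n * t\<rfloor>"
  have k1: "real k \<le> real n * t" "real n * t < real k + 1" using assms unfolding k_def
    by (auto simp: of_nat_nat)
  have kn: "k < n"
  proof -
    have "real k < real n" using k1 assms(5) assms(3)
      by (smt (verit) mult_less_cancel_left2 of_nat_0_less_iff)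
    then show ?thesis by simp
  qed
  have eq: "{x. cdf (emp_measure xs) x \<le> t} = {..<xs ! k}"
  proof (intro set_eqI iffI)
    fix x assume "x \<in> {x. cdf (emp_measure xs) x \<le> t}"
    then have "card {i\<in>{..<n}. xs ! i \<le> x} / n \<le> t" using cdf_emp[OF assms(2,3)] by simp
    then have c: "real (card {i\<in>{..<n}. xs ! i \<le> x}) \<le> real n * t"
      using assms(3) by (simp add: divide_le_eq mult.commute)
    show "x \<in> {..<xs ! k}"
    proof (rule ccontr)
      assume "x \<notin> {..<xs ! k}"
      then have "xs ! k \<le> x" by auto
      then have "{..k} \<subseteq> {i\<in>{..<n}. xs ! i \<le> x}"
        using sorted_nth_mono[OF assms(1)] kn assms(2) by (auto intro: order_trans)
      then have "card {..k} \<le> card {i\<in>{..<n}. xs ! i \<le> x}" by (intro card_mono) auto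
      then show False using c k1 by simp
    qed
  next
    fix x assume "x \<in> {..<xs ! k}"
    then have xk: "x < xs ! k" by simp
    have "{i\<in>{..<n}. xs ! i \<le> x} \<subseteq> {..<k}"
    proof
      fix i assume "i \<in> {i\<in>{..<n}. xs ! i \<le> x}"
      then have "i < n" "xs ! i \<le> x" by auto
      show "i \<in> {..<k}"
      proof (rule ccontr)
        assume "i \<notin> {..<k}"
        then have "xs ! k \<le> xs ! i" using sorted_nth_mono[OF assms(1), of k i] \<open>i<n\<close> assms(2) by auto
        then show False using xk \<open>xs ! i \<le> x\<close> by auto
      qed
    qed
    then have "card {i\<in>{..<n}. xs ! i \<le> x} \<le> k" by (metis card_lessThan card_mono finite_lessThan)
    then have "real (card {i\<in>{..<n}. xs ! i \<le> x}) \<le> real n * t" using k1 by linarith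
    then have "card {i\<in>{..<n}. xs ! i \<le> x} / n \<le> t"
      using assms(3) by (simp add: divide_le_eq mult.commute)
    then show "x \<in> {x. cdf (emp_measure xs) x \<le> t}" using cdf_emp[OF assms(2,3)] by simp
  qed
  show ?thesis unfolding quantile_def eq k_def by simp
qed


lemma powr_tangent:
  fixes x c r :: real
  assumes "r \<ge> 1" "0 < c" "0 \<le> x"
  shows "c powr r + r * c powr (r - 1) * (x - c) \<le> x powr r"
proof (cases "x = 0")
  case True
  have e: "c powr (r - 1) * c = c powr r" using assms(2) by (simp add: powr_diff)
  have e2: "r * c powr (r - 1) * (x - c) = - (r * c powr r)" using True e
    by (metis add_0 diff_0 mult.assoc mult_minus_right)
  have "c powr r \<le> r * c powr r" using assms(1) by (simp add: mult_le_cancel_right1)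
  moreover have "x powr r = 0" using True by simp
  ultimately show ?thesis using e2 by linarith
next
  case False
  then have "x \<in> {0<..}" using assms by auto
  have "x powr r - c powr r \<ge> r * c powr (r - 1) * (x - c)"
    by (rule convex_on_imp_above_tangent[OF powr_convex[OF assms(1)]])
       (use assms \<open>x \<in> {0<..}\<close> in \<open>auto simp: interior_open intro: has_field_derivative_at_within has_real_derivative_powr\<close>)
  then show ?thesis by simp
qed

lemma jensen_powr:
  assumes "r \<ge> 1" "\<And>t. f t \<ge> (0::real)" "integrable Om f" "integrable Om (\<lambda>t. f t powr r)"
  shows "(integral\<^sup>L Om f) powr r \<le> integral\<^sup>L Om (\<lambda>t. f t powr r)"
proof -
  interpret P: prob_space Om by (rule Om_prob)
  define c where "c = integral\<^sup>L Om f"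
  have c0: "c \<ge> 0" unfolding c_def using assms(2) by (simp add: integral_nonneg_AE)
  show ?thesis
  proof (cases "c = 0")
    case True
    then show ?thesis using assms(1) unfolding c_def by (simp add: integral_nonneg_AE)
  next
    case False
    then have cp: "c > 0" using c0 by auto
    have "integral\<^sup>L Om (\<lambda>t. c powr r + r * c powr (r - 1) * (f t - c)) \<le> integral\<^sup>L Om (\<lambda>t. f t powr r)"
      by (rule integral_mono) (use assms cp powr_tangent in auto)
    also have "integral\<^sup>L Om (\<lambda>t. c powr r + r * c powr (r - 1) * (f t - c)) = c powr r"
      using assms(3) P.prob_space by (simp add: c_def)
    finally show ?thesis unfolding c_def .
  qed
qed


lemma Om_lower:
  fixes g \<psi> :: "real \<Rightarrow> real"
  assumes "integrable Om g" "\<And>t. 0 < t \<Longrightarrow> t < 1 \<Longrightarrow> \<psi> t \<le> g t" "integrable lborel \<psi>"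
    "\<And>t. \<not> (0 < t \<and> t < 1) \<Longrightarrow> \<psi> t \<le> 0"
  shows "integral\<^sup>L lborel \<psi> \<le> integral\<^sup>L Om g"
proof -
  have "integral\<^sup>L Om g = integral\<^sup>L lborel (\<lambda>t. indicator {0<..<1} t *\<^sub>R g t)"
    by (rule integral_restrict_space) simp
  moreover have "integrable lborel (\<lambda>t. indicator {0<..<1} t *\<^sub>R g t)"
    using assms(1) integrable_restrict_space[of "{0<..<1::real}" lborel g] by simp
  moreover have "\<psi> t \<le> indicator {0<..<1} t *\<^sub>R g t" for t
    using assms(2,4)[of t] by (cases "0 < t \<and> t < 1") (auto simp: indicator_def)
  ultimately show ?thesis using assms(3) by (simp add: integral_mono)
qed

lemma floor_nat_eq: "real k \<le> x \<Longrightarrow> x < real k + 1 \<Longrightarrow> nat \<lfloor>x\<rfloor> = k"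
  by (metis floor_eq2 nat_int of_int_of_nat_eq)

lemma int_ind_const:
  assumes "u \<le> v"
  shows "integral\<^sup>L lborel (\<lambda>t. (c::real) * indicator {u<..<v::real} t) = c * (v - u)"
  using assms by simp


lemma int_ind_integrable:
  "integrable lborel (\<lambda>t. (c::real) * indicator {u<..<v::real} t)"
proof (cases "u \<le> v")
  case True
  then show ?thesis
    by (intro integrable_mult_right integrable_real_indicator) (auto simp: emeasure_lborel_Ioo)
qed simp

lemma A1: "0 < (x::real) \<Longrightarrow> real (nat \<lceil>x\<rceil> - 1) < x" by linarith
lemma A2: "nat \<lceil>x::real\<rceil> - 1 \<le> i \<Longrightarrow> x \<le> real i + 1" by linarith
lemma A3: "0 \<le> (y::real) \<Longrightarrow> y < real (nat \<lfloor>y\<rfloor>) + 1" by linarith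
lemma A4: "i \<le> nat \<lfloor>y::real\<rfloor> \<Longrightarrow> 0 \<le> y \<Longrightarrow> real i \<le> y" by linarith

lemma A5: "x < real m + 1 \<Longrightarrow> nat \<lfloor>x::real\<rfloor> \<le> m" by linarith
lemma A6: "real m \<le> x \<Longrightarrow> m \<le> nat \<lfloor>x::real\<rfloor>" by linarith

lemma A7: "x < real n \<Longrightarrow> 0 < n \<Longrightarrow> nat \<lfloor>x::real\<rfloor> < n" by linarith

lemma key:
  fixes q :: "real \<Rightarrow> real" and a b :: "real list" and n :: nat
  assumes n: "0 < n" "length a = n" "length b = Suc n" "sorted a" "sorted b"
    and q: "mono_on {0<..<1} q"
    and t: "0 < t1" "t1 < t2" "t2 < 1" "q t1 < q t2"
    and ia: "integrable Om (\<lambda>t. \<bar>a ! nat \<lfloor>real n * t\<rfloor> - q t\<bar>)"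
    and ib: "integrable Om (\<lambda>t. \<bar>b ! nat \<lfloor>(real n + 1) * t\<rfloor> - q t\<bar>)"
  shows "min t1 (1 - t2) * (q t2 - q t1) / (8 * (real n + 1))
     \<le> integral\<^sup>L Om (\<lambda>t. \<bar>a ! nat \<lfloor>real n * t\<rfloor> - q t\<bar>)
       + integral\<^sup>L Om (\<lambda>t. \<bar>b ! nat \<lfloor>(real n + 1) * t\<rfloor> - q t\<bar>)"
proof -
  define N where "N = real n"
  have N0: "N > 0" using n by (simp add: N_def)
  define ea where "ea = (\<lambda>t. a ! nat \<lfloor>N * t\<rfloor>)"
  define eb where "eb = (\<lambda>t. b ! nat \<lfloor>(N + 1) * t\<rfloor>)"
  define ga where "ga = (\<lambda>t. \<bar>ea t - q t\<bar>)"
  define gb where "gb = (\<lambda>t. \<bar>eb t - q t\<bar>)"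
  have iga: "integrable Om ga" using ia by (simp add: ga_def ea_def N_def)
  have igb: "integrable Om gb" using ib by (simp add: gb_def eb_def N_def)
  define e where "e = min t1 (1 - t2) / 4"
  define D where "D = q t2 - q t1"
  have e0: "e > 0" and D0: "D > 0" using t by (auto simp: e_def D_def)
  have et1: "4 * e \<le> t1" and et2: "4 * e \<le> 1 - t2" by (auto simp: e_def)
  have ab: "integral\<^sup>L Om (\<lambda>t. \<bar>a ! nat \<lfloor>real n * t\<rfloor> - q t\<bar>)
       + integral\<^sup>L Om (\<lambda>t. \<bar>b ! nat \<lfloor>(real n + 1) * t\<rfloor> - q t\<bar>) = integral\<^sup>L Om ga + integral\<^sup>L Om gb"
    by (simp add: ga_def gb_def ea_def eb_def N_def)
  have goal_eq: "min t1 (1 - t2) * (q t2 - q t1) / (8 * (real n + 1)) = e * D / (2 * (N + 1))"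
    by (simp add: e_def D_def N_def)
  have nonneg_a: "0 \<le> integral\<^sup>L Om ga" by (simp add: ga_def integral_nonneg_AE)
  have nonneg_b: "0 \<le> integral\<^sup>L Om gb" by (simp add: gb_def integral_nonneg_AE)
  define i1 where "i1 = nat \<lceil>e * N\<rceil> - 1"
  define i2 where "i2 = nat \<lfloor>N - e * N\<rfloor>"
  have eN0: "e * N > 0" using e0 N0 by simp
  have e1: "e < 1" using et1 t by linarith
  have eNN: "e * N < N" using e1 N0 by simp
  have i1a: "real i1 < e * N" unfolding i1_def by (rule A1[OF eN0])
  have i1b: "i \<ge> i1 \<Longrightarrow> e * N \<le> real i + 1" for i unfolding i1_def by (rule A2)
  have i2a: "N - e * N < real i2 + 1" unfolding i2_def using eNN by (intro A3) simp
  have i2b: "i \<le> i2 \<Longrightarrow> real i \<le> N - e * N" for i unfolding i2_def using eNN by (intro A4) simp_all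
  have i2n: "i2 < n" using i2b[of i2] eN0 by (simp add: N_def)
  have qmono: "0 < s \<Longrightarrow> s \<le> s' \<Longrightarrow> s' < 1 \<Longrightarrow> q s \<le> q s'" for s s'
    using q by (auto intro: mono_onD)
  show ?thesis
  proof (cases "b ! Suc i2 - b ! i1 \<ge> D / 2")
    case False
    have range: "b ! i1 \<le> eb t \<and> eb t \<le> b ! Suc i2"
      if "t1 / 2 < t \<and> t < t1 \<or> t2 < t \<and> t < (1 + t2) / 2" for t
    proof -
      have te: "e \<le> t" and tp: "0 < t" and t12: "t \<le> 1 - 2 * e" using that et1 et2 t e0 by auto
      have "N * e \<le> N * t" using te N0 by (intro mult_left_mono) auto
      moreover have "N * t \<le> (N + 1) * t" using tp by (simp add: distrib_right)
      ultimately have lo: "real i1 \<le> (N + 1) * t" using i1a by (simp add: mult.commute)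
      have "(N + 1) * t \<le> (N + 1) * (1 - 2 * e)" using t12 N0 by (intro mult_left_mono) auto
      also have "\<dots> = N + 1 - 2 * (e * N) - 2 * e" by (simp add: algebra_simps)
      finally have hi: "(N + 1) * t < real (Suc i2) + 1" using i2a e0 eN0 by simp
      define k where "k = nat \<lfloor>(N + 1) * t\<rfloor>"
      have k1: "i1 \<le> k" unfolding k_def by (rule A6[OF lo])
      have k2: "k \<le> Suc i2" unfolding k_def by (rule A5[OF hi])
      have ebk: "eb t = b ! k" by (simp add: eb_def k_def)
      show ?thesis unfolding ebk using k1 k2 i2n n(3)
        by (auto intro!: sorted_nth_mono[OF n(5)])
    qed
    show ?thesis
    proof (cases "b ! i1 > q t1 + D / 4")
      case True
      have "integral\<^sup>L lborel (\<lambda>t. D / 4 * indicator {t1/2<..<t1} t) \<le> integral\<^sup>L Om gb"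
      proof (rule Om_lower[OF igb])
        fix t :: real assume "0 < t" "t < 1"
        show "D / 4 * indicator {t1/2<..<t1} t \<le> gb t"
        proof (cases "t \<in> {t1/2<..<t1}")
          case True
          then have "q t \<le> q t1" using qmono[of t t1] t \<open>0<t\<close> by auto
          moreover have "b ! i1 \<le> eb t" using range[of t] True by auto
          ultimately show ?thesis using \<open>b ! i1 > q t1 + D / 4\<close> True abs_ge_self[of "eb t - q t"]
            by (auto simp: gb_def)
        qed (auto simp: gb_def)
      next
        fix t :: real assume "\<not> (0 < t \<and> t < 1)"
        then show "D / 4 * indicator {t1/2<..<t1} t \<le> 0" using t by (auto simp: indicator_def)
      qed (rule int_ind_integrable)
      moreover have "integral\<^sup>L lborel (\<lambda>t. D / 4 * indicator {t1/2<..<t1} t) = D / 4 * (t1 - t1 / 2)"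
        using t by (intro int_ind_const) auto
      moreover have "e * D / (2 * (N + 1)) \<le> D / 4 * (t1 - t1 / 2)"
      proof -
        have "e * D / (2 * (N + 1)) \<le> e * D / 2" using e0 D0 N0 by (intro divide_left_mono) auto
        moreover have "(4 * e) * D \<le> t1 * D" using et1 D0 by (intro mult_right_mono) auto
        then have "e * D / 2 \<le> D / 4 * (t1 - t1 / 2)" by (simp add: field_simps)
        ultimately show ?thesis by linarith
      qed
      ultimately show ?thesis unfolding goal_eq ab using nonneg_a by linarith
    next
      case False
      have "integral\<^sup>L lborel (\<lambda>t. D / 4 * indicator {t2<..<(1+t2)/2} t) \<le> integral\<^sup>L Om gb"
      proof (rule Om_lower[OF igb])
        fix t :: real assume "0 < t" "t < 1"
        show "D / 4 * indicator {t2<..<(1+t2)/2} t \<le> gb t"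
        proof (cases "t \<in> {t2<..<(1+t2)/2}")
          case True
          then have "q t2 \<le> q t" using qmono[of t2 t] t \<open>t<1\<close> by auto
          moreover have "eb t \<le> b ! Suc i2" using range[of t] True by auto
          moreover have "b ! i1 \<le> q t1 + D / 4" "b ! Suc i2 - b ! i1 < D / 2"
            using \<open>\<not> b ! i1 > q t1 + D / 4\<close> \<open>\<not> b ! Suc i2 - b ! i1 \<ge> D / 2\<close> by auto
          ultimately have "D / 4 \<le> q t - eb t" unfolding D_def by (simp add: field_simps)
          then have "D / 4 \<le> gb t" unfolding gb_def by linarith
          then show ?thesis using True by simp
        qed (auto simp: gb_def)
      next
        fix t :: real assume "\<not> (0 < t \<and> t < 1)"
        then show "D / 4 * indicator {t2<..<(1+t2)/2} t \<le> 0" using t by (auto simp: indicator_def)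
      qed (rule int_ind_integrable)
      moreover have "integral\<^sup>L lborel (\<lambda>t. D / 4 * indicator {t2<..<(1+t2)/2} t) = D / 4 * ((1+t2)/2 - t2)"
        using t by (intro int_ind_const) auto
      moreover have "e * D / (2 * (N + 1)) \<le> D / 4 * ((1+t2)/2 - t2)"
      proof -
        have "e * D / (2 * (N + 1)) \<le> e * D / 2" using e0 D0 N0 by (intro divide_left_mono) auto
        moreover have "(4 * e) * D \<le> (1 - t2) * D" using et2 D0 by (intro mult_right_mono) auto
        then have "e * D / 2 \<le> D / 4 * ((1+t2)/2 - t2)" by (simp add: field_simps)
        ultimately show ?thesis by linarith
      qed
      ultimately show ?thesis unfolding goal_eq ab using nonneg_a by linarith
    qed
  next
    case True
    have i12: "i1 \<le> i2"
    proof (rule ccontr)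
      assume "\<not> i1 \<le> i2"
      moreover have "i1 < n" using i1a eNN by (simp add: N_def)
      ultimately have "b ! Suc i2 \<le> b ! i1" using i2n n(3) by (intro sorted_nth_mono[OF n(5)]) auto
      then show False using True D0 by linarith
    qed
    define L where "L = (\<lambda>i::nat. {real i / N <..< (real i + 1) / (N + 1)})"
    define R where "R = (\<lambda>i::nat. {(real i + 1) / (N + 1) <..< (real i + 1) / N})"
    define cL where "cL = (\<lambda>i. \<bar>a ! i - b ! i\<bar>)"
    define cR where "cR = (\<lambda>i. \<bar>a ! i - b ! Suc i\<bar>)"
    define trm where "trm = (\<lambda>i t. cL i * indicator (L i) t + cR i * indicator (R i) t)"
    define \<psi> where "\<psi> = (\<lambda>t. \<Sum>i\<in>{i1..i2}. trm i t)"
    have inJ: "i < n" "e * N \<le> real i + 1" "real i \<le> N - e * N" if "i \<in> {i1..i2}" for i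
      using that i2n i1b i2b by auto
    have lenL: "e / (N + 1) \<le> (real i + 1) / (N + 1) - real i / N" if "i \<in> {i1..i2}" for i
    proof -
      have eq1: "(real i + 1) / (N + 1) - real i / N = (N - real i) / (N * (N + 1))"
        using N0 by (simp add: field_simps)
      have eq2: "e / (N + 1) = (e * N) / (N * (N + 1))" using N0 by simp
      have "(e * N) / (N * (N + 1)) \<le> (N - real i) / (N * (N + 1))"
        using inJ(3)[OF that] N0 by (intro divide_right_mono) auto
      then show ?thesis using eq1 eq2 by simp
    qed
    have lenR: "e / (N + 1) \<le> (real i + 1) / N - (real i + 1) / (N + 1)" if "i \<in> {i1..i2}" for i
    proof -
      have eq1: "(real i + 1) / N - (real i + 1) / (N + 1) = (real i + 1) / (N * (N + 1))"
        using N0 by (simp add: field_simps)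
      have eq2: "e / (N + 1) = (e * N) / (N * (N + 1))" using N0 by simp
      have "(e * N) / (N * (N + 1)) \<le> (real i + 1) / (N * (N + 1))"
        using inJ(2)[OF that] N0 by (intro divide_right_mono) auto
      then show ?thesis using eq1 eq2 by simp
    qed
    have ordL: "real i / N \<le> (real i + 1) / (N + 1)" if "i \<in> {i1..i2}" for i
      using lenL[OF that] e0 N0 divide_pos_pos[of e "N+1"] by linarith
    have ordR: "(real i + 1) / (N + 1) \<le> (real i + 1) / N" if "i \<in> {i1..i2}" for i
      using lenR[OF that] e0 N0 divide_pos_pos[of e "N+1"] by linarith
    have int_trm: "integral\<^sup>L lborel (trm i) = cL i * ((real i + 1) / (N + 1) - real i / N)
        + cR i * ((real i + 1) / N - (real i + 1) / (N + 1))" if "i \<in> {i1..i2}" for i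
      unfolding trm_def L_def R_def
      by (simp only: Bochner_Integration.integral_add[OF int_ind_integrable int_ind_integrable]
          int_ind_const[OF ordL[OF that]] int_ind_const[OF ordR[OF that]])
    have itrm: "integrable lborel (trm i)" for i
      unfolding trm_def L_def R_def by (intro Bochner_Integration.integrable_add int_ind_integrable)
    have ipsi: "integrable lborel \<psi>" unfolding \<psi>_def using itrm by (intro Bochner_Integration.integrable_sum) auto
    have "integral\<^sup>L lborel \<psi> = (\<Sum>i\<in>{i1..i2}. integral\<^sup>L lborel (trm i))"
      unfolding \<psi>_def using itrm by (intro Bochner_Integration.integral_sum) auto
    also have "\<dots> \<ge> (\<Sum>i\<in>{i1..i2}. e / (N + 1) * (b ! Suc i - b ! i))"
    proof (rule sum_mono)
      fix i assume i: "i \<in> {i1..i2}"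
      have "e / (N + 1) * (b ! Suc i - b ! i) \<le> e / (N + 1) * (cL i + cR i)"
        unfolding cL_def cR_def using e0 N0 by (intro mult_left_mono) auto
      also have "\<dots> = cL i * (e / (N + 1)) + cR i * (e / (N + 1))" by (simp only: distrib_left distrib_right mult.commute)
      also have "\<dots> \<le> integral\<^sup>L lborel (trm i)" unfolding int_trm[OF i]
        using lenL[OF i] lenR[OF i] by (intro add_mono mult_left_mono) (auto simp: cL_def cR_def)
      finally show "e / (N + 1) * (b ! Suc i - b ! i) \<le> integral\<^sup>L lborel (trm i)" .
    qed
    also have "(\<Sum>i\<in>{i1..i2}. e / (N + 1) * (b ! Suc i - b ! i)) = e / (N + 1) * (b ! Suc i2 - b ! i1)"
      using i12 by (simp only: sum_distrib_left[symmetric] sum_Suc_diff[of i1 i2 "\<lambda>i. b ! i"] le_SucI)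
    finally have psi_ge: "e / (N + 1) * (b ! Suc i2 - b ! i1) \<le> integral\<^sup>L lborel \<psi>" .
    have trm0: "trm i t = 0" if "i \<noteq> nat \<lfloor>N * t\<rfloor>" "i \<in> {i1..i2}" for i t
    proof -
      have "t \<notin> L i \<and> t \<notin> R i"
      proof (rule ccontr)
        assume "\<not> (t \<notin> L i \<and> t \<notin> R i)"
        then have "real i / N < t \<and> t < (real i + 1) / N"
          using ordL[OF that(2)] ordR[OF that(2)] unfolding L_def R_def by auto
        then have "real i < N * t \<and> N * t < real i + 1" using N0
          by (auto simp: field_simps)
        then have "nat \<lfloor>N * t\<rfloor> = i" by (intro floor_nat_eq) auto
        then show False using that by simp
      qed
      then show ?thesis unfolding trm_def by simp
    qed
    have trm_out: "trm i t = 0" if "\<not> (0 < t \<and> t < 1)" "i \<in> {i1..i2}" for i t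
    proof -
      have "(real i + 1) / N \<le> 1" using inJ(1)[OF that(2)] N0 by (simp add: N_def field_simps)
      moreover have "0 \<le> real i / N" using N0 by simp
      ultimately have "t \<notin> L i \<and> t \<notin> R i"
        using that(1) ordL[OF that(2)] ordR[OF that(2)] unfolding L_def R_def by auto
      then show ?thesis unfolding trm_def by simp
    qed
    have trm_le: "trm i t \<le> ga t + gb t" if "i = nat \<lfloor>N * t\<rfloor>" "i \<in> {i1..i2}" for i t
    proof -
      have ea_i: "ea t = a ! i" unfolding ea_def that(1) ..
      consider "t \<in> L i" | "t \<in> R i" | "t \<notin> L i \<and> t \<notin> R i" by blast
      then show ?thesis
      proof cases
        case 1
        then have tR: "t \<notin> R i" unfolding L_def R_def by auto
        have tt: "real i / N < t" "t < (real i + 1) / (N + 1)" using 1 unfolding L_def by auto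
        have h1: "real i < t * N" using tt(1) N0 by (simp add: pos_divide_less_eq)
        have h2: "t * (N + 1) < real i + 1" using tt(2) N0 by (simp add: pos_less_divide_eq)
        have tpos: "0 < t" using tt(1) N0 by (smt (verit) divide_nonneg_pos of_nat_0_le_iff)
        have "real i \<le> (N + 1) * t" "(N + 1) * t < real i + 1" using h1 h2 tpos
          by (simp_all add: algebra_simps)
        then have "eb t = b ! i" unfolding eb_def by (subst floor_nat_eq[of i]) auto
        then have "trm i t = \<bar>ea t - eb t\<bar>" using 1 tR ea_i unfolding trm_def cL_def by simp
        then show ?thesis unfolding ga_def gb_def by linarith
      next
        case 2
        then have tL: "t \<notin> L i" unfolding L_def R_def by auto
        have tt: "(real i + 1) / (N + 1) < t" "t < (real i + 1) / N" using 2 unfolding R_def by auto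
        have h1: "real i + 1 < t * (N + 1)" using tt(1) N0 by (simp add: pos_divide_less_eq)
        have h2: "t * N < real i + 1" using tt(2) N0 by (simp add: pos_less_divide_eq)
        have "(real i + 1) / N \<le> 1" using inJ(1)[OF that(2)] N0 by (simp add: N_def field_simps)
        then have t1': "t < 1" using tt(2) by linarith
        have "real (Suc i) \<le> (N + 1) * t" "(N + 1) * t < real (Suc i) + 1" using h1 h2 t1'
          by (simp_all add: algebra_simps)
        then have "eb t = b ! Suc i" unfolding eb_def by (subst floor_nat_eq[of "Suc i"]) auto
        then have "trm i t = \<bar>ea t - eb t\<bar>" using 2 tL ea_i unfolding trm_def cR_def by simp
        then show ?thesis unfolding ga_def gb_def by linarith
      next
        case 3
        then show ?thesis unfolding trm_def ga_def gb_def by simp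
      qed
    qed
    have "integral\<^sup>L lborel \<psi> \<le> integral\<^sup>L Om (\<lambda>t. ga t + gb t)"
    proof (rule Om_lower)
      show "integrable Om (\<lambda>t. ga t + gb t)" using iga igb by (rule Bochner_Integration.integrable_add)
      show "integrable lborel \<psi>" by (rule ipsi)
    next
      fix t :: real assume "0 < t" "t < 1"
      define i0 where "i0 = nat \<lfloor>N * t\<rfloor>"
      have "\<psi> t = (\<Sum>i\<in>{i1..i2}. if i = i0 then trm i t else 0)"
        unfolding \<psi>_def using trm0 unfolding i0_def by (intro sum.cong) auto
      also have "\<dots> = (if i0 \<in> {i1..i2} then trm i0 t else 0)" by simp
      also have "\<dots> \<le> ga t + gb t" using trm_le[of i0 t] unfolding i0_def ga_def gb_def by auto
      finally show "\<psi> t \<le> ga t + gb t" .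
    next
      fix t :: real assume "\<not> (0 < t \<and> t < 1)"
      then show "\<psi> t \<le> 0" unfolding \<psi>_def using trm_out by simp
    qed
    also have "\<dots> = integral\<^sup>L Om ga + integral\<^sup>L Om gb"
      using iga igb by (rule Bochner_Integration.integral_add)
    finally have "integral\<^sup>L lborel \<psi> \<le> integral\<^sup>L Om ga + integral\<^sup>L Om gb" .
    moreover have "e * D / (2 * (N + 1)) \<le> e / (N + 1) * (b ! Suc i2 - b ! i1)"
    proof -
      have "e / (N + 1) * (D / 2) \<le> e / (N + 1) * (b ! Suc i2 - b ! i1)"
        using True e0 N0 by (intro mult_left_mono) auto
      then show ?thesis by (simp add: field_simps)
    qed
    ultimately show ?thesis unfolding goal_eq ab using psi_ge by linarith
  qed
qed


lemma powr_sum_le: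
  fixes u v r :: real
  assumes "0 \<le> u" "0 \<le> v" "0 \<le> r"
  shows "(u + v) powr r \<le> 2 powr r * (u powr r + v powr r)"
proof -
  have "(u + v) powr r \<le> (2 * max u v) powr r" using assms by (intro powr_mono2) auto
  also have "\<dots> = 2 powr r * max u v powr r" using assms by (simp add: powr_mult)
  also have "max u v powr r \<le> u powr r + v powr r" by (cases "u \<le> v") (auto simp: max_def)
  then have "2 powr r * max u v powr r \<le> 2 powr r * (u powr r + v powr r)" by (intro mult_left_mono) auto
  finally show ?thesis .
qed

lemma abs_le_powr: "r \<ge> 1 \<Longrightarrow> \<bar>x::real\<bar> \<le> 1 + \<bar>x\<bar> powr r"
proof (cases "\<bar>x\<bar> \<le> 1")
  case False
  assume r: "r \<ge> 1"
  then have "\<bar>x\<bar> powr 1 \<le> \<bar>x\<bar> powr r" using False by (intro powr_mono) auto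
  then show ?thesis by simp
qed (use powr_ge_zero[of "\<bar>x\<bar>" r] in linarith)

lemma integrable_diff_bounds:
  fixes q e :: "real \<Rightarrow> real"
  assumes r: "r \<ge> 1" and iq: "integrable Om (\<lambda>t. \<bar>q t\<bar> powr r)"
    and mq: "q \<in> borel_measurable Om" and me: "e \<in> borel_measurable Om"
    and B: "\<And>t. 0 < t \<Longrightarrow> t < 1 \<Longrightarrow> \<bar>e t\<bar> \<le> B"
  shows "integrable Om (\<lambda>t. \<bar>e t - q t\<bar>)" "integrable Om (\<lambda>t. \<bar>e t - q t\<bar> powr r)"
proof -
  interpret P: prob_space Om by (rule Om_prob)
  have sp: "space Om = {0<..<1}" by (simp add: space_restrict_space)
  have B0: "0 \<le> B" using B[of "1/2"] by auto
  show "integrable Om (\<lambda>t. \<bar>e t - q t\<bar>)"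
  proof (rule Bochner_Integration.integrable_bound)
    show "integrable Om (\<lambda>t. B + 1 + \<bar>q t\<bar> powr r)"
      using iq by (intro Bochner_Integration.integrable_add) auto
    show "(\<lambda>t. \<bar>e t - q t\<bar>) \<in> borel_measurable Om" using mq me by measurable
    show "AE t in Om. norm \<bar>e t - q t\<bar> \<le> norm (B + 1 + \<bar>q t\<bar> powr r)"
    proof (rule AE_I2)
      fix t assume "t \<in> space Om"
      then have "\<bar>e t\<bar> \<le> B" using B sp by auto
      moreover have "\<bar>q t\<bar> \<le> 1 + \<bar>q t\<bar> powr r" using abs_le_powr[OF r] .
      ultimately show "norm \<bar>e t - q t\<bar> \<le> norm (B + 1 + \<bar>q t\<bar> powr r)" using B0 by simp
    qed
  qed
  show "integrable Om (\<lambda>t. \<bar>e t - q t\<bar> powr r)"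
  proof (rule Bochner_Integration.integrable_bound)
    show "integrable Om (\<lambda>t. 2 powr r * (B powr r + \<bar>q t\<bar> powr r))"
      using iq by (intro integrable_mult_right Bochner_Integration.integrable_add) auto
    show "(\<lambda>t. \<bar>e t - q t\<bar> powr r) \<in> borel_measurable Om" using mq me by measurable
    show "AE t in Om. norm (\<bar>e t - q t\<bar> powr r) \<le> norm (2 powr r * (B powr r + \<bar>q t\<bar> powr r))"
    proof (rule AE_I2)
      fix t assume "t \<in> space Om"
      then have "\<bar>e t\<bar> \<le> B" using B sp by auto
      then have "\<bar>e t - q t\<bar> \<le> B + \<bar>q t\<bar>" by linarith
      then have "\<bar>e t - q t\<bar> powr r \<le> (B + \<bar>q t\<bar>) powr r" using r by (intro powr_mono2) auto
      also have "\<dots> \<le> 2 powr r * (B powr r + \<bar>q t\<bar> powr r)" using B0 r by (intro powr_sum_le) auto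
      finally show "norm (\<bar>e t - q t\<bar> powr r) \<le> norm (2 powr r * (B powr r + \<bar>q t\<bar> powr r))" by simp
    qed
  qed
qed

lemma step_mono:
  fixes xs :: "real list"
  assumes "sorted xs" "length xs = n" "0 < n"
  shows "mono_on {0<..<1} (\<lambda>t. xs ! nat \<lfloor>real n * t\<rfloor>)"
proof (rule mono_onI)
  fix s t :: real assume st: "s \<in> {0<..<1}" "t \<in> {0<..<1}" "s \<le> t"
  have "real n * s \<le> real n * t" using st by (intro mult_left_mono) auto
  then have "nat \<lfloor>real n * s\<rfloor> \<le> nat \<lfloor>real n * t\<rfloor>" by (intro nat_mono floor_mono)
  moreover have "nat \<lfloor>real n * t\<rfloor> < n"
  proof -
    have "real n * t < real n" using st assms(3) by simp
    then show ?thesis using assms(3) by (rule A7)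
  qed
  ultimately show "xs ! nat \<lfloor>real n * s\<rfloor> \<le> xs ! nat \<lfloor>real n * t\<rfloor>"
    using assms by (intro sorted_nth_mono) auto
qed

lemma step_bound:
  fixes xs :: "real list"
  assumes "length xs = n" "0 < n" "0 < t" "t < 1"
  shows "\<bar>xs ! nat \<lfloor>real n * t\<rfloor>\<bar> \<le> (\<Sum>i<n. \<bar>xs ! i\<bar>)"
proof -
  have "real n * t < real n" using assms by simp
  then have "nat \<lfloor>real n * t\<rfloor> < n" using assms(2) by (rule A7)
  then show ?thesis using member_le_sum[of "nat \<lfloor>real n * t\<rfloor>" "{..<n}" "\<lambda>i. \<bar>xs ! i\<bar>"] by auto
qed

lemma LINT_Om: "(LINT t:{0<..<1}|lborel. f t) = integral\<^sup>L Om (f::real \<Rightarrow> real)"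
  unfolding set_lebesgue_integral_def by (rule integral_restrict_space[symmetric]) simp


theorem theorem5p7:
  fixes \<mu> :: "real measure" and r :: real
  assumes "r \<ge> 1"
    and "prob_space \<mu>" and "sets \<mu> = sets borel"
    and "integrable \<mu> (\<lambda>x. \<bar>x\<bar> powr r)"
    and "\<not> (\<exists>a::real. \<mu> = return borel a)"
  shows "limsup (\<lambda>n. ereal (real n * opt_quant_dist r n \<mu>)) > 0"
proof -
  note r = assms(1)
  have rd: "real_distribution \<mu>"
    unfolding real_distribution_def real_distribution_axioms_def using assms(2,3) by simp
  interpret cdf_distribution \<mu> using rd by (simp add: cdf_distribution_def)
  define q where "q = quantile \<mu>"
  have qm: "mono_on {0<..<1} q" unfolding q_def by (rule quantile_mono)
  have ex: "\<exists>t1 t2. 0 < t1 \<and> t1 < t2 \<and> t2 < 1 \<and> q t1 < q t2"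
  proof (rule ccontr)
    assume na: "\<not> (\<exists>t1 t2. 0 < t1 \<and> t1 < t2 \<and> t2 < 1 \<and> q t1 < q t2)"
    have nt: "\<not> q s < q t" if "0 < s" "s < t" "t < 1" for s t
      using na that by blast
    have "q t = q (1/2)" if "0 < t" "t < 1" for t
    proof (cases t "1/2::real" rule: linorder_cases)
      case less
      have "q t \<le> q (1/2)" using mono_onD[OF qm, of t "1/2"] that less by simp
      moreover have "\<not> q t < q (1/2)" using nt[of t "1/2"] that less by simp
      ultimately show ?thesis by linarith
    next
      case greater
      have "q (1/2) \<le> q t" using mono_onD[OF qm, of "1/2" t] that greater by simp
      moreover have "\<not> q (1/2) < q t" using nt[of "1/2" t] that greater by simp
      ultimately show ?thesis by linarith
    next
      case equal
      then show ?thesis by (simp only:)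
    qed
    then have "\<mu> = return borel (q (1/2))" unfolding q_def by (rule quantile_const_imp)
    then show False using assms(5) by blast
  qed
  then obtain t1 t2 where t: "0 < t1" "t1 < t2" "t2 < 1" "q t1 < q t2" by blast
  have iq: "integrable Om (\<lambda>t. \<bar>q t\<bar> powr r)"
    unfolding q_def by (rule integrable_quantile[OF _ assms(4)]) measurable
  have mq: "q \<in> borel_measurable Om" by (rule meas_Om_mono[OF qm])
  define W where "W xs = wass_dist r (emp_measure xs) \<mu>" for xs
  have WD: "integrable Om (\<lambda>t. \<bar>xs ! nat \<lfloor>real n * t\<rfloor> - q t\<bar>)
      \<and> integral\<^sup>L Om (\<lambda>t. \<bar>xs ! nat \<lfloor>real n * t\<rfloor> - q t\<bar>) \<le> W xs"
    if xs: "sorted xs" "length xs = n" "0 < n" for xs n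
  proof -
    define e where "e = (\<lambda>t. xs ! nat \<lfloor>real n * t\<rfloor>)"
    have me: "e \<in> borel_measurable Om" unfolding e_def by (rule meas_Om_mono[OF step_mono[OF xs]])
    have eB: "\<bar>e t\<bar> \<le> (\<Sum>i<n. \<bar>xs ! i\<bar>)" if "0 < t" "t < 1" for t
      unfolding e_def using step_bound[OF xs(2,3) that] .
    note ints = integrable_diff_bounds[OF r iq mq me eB]
    have "W xs = (integral\<^sup>L Om (\<lambda>t. \<bar>e t - q t\<bar> powr r)) powr (1 / r)"
    proof -
      have "W xs = (integral\<^sup>L Om (\<lambda>t. \<bar>quantile (emp_measure xs) t - quantile \<mu> t\<bar> powr r)) powr (1 / r)"
        unfolding W_def wass_dist_def LINT_Om ..
      also have "integral\<^sup>L Om (\<lambda>t. \<bar>quantile (emp_measure xs) t - quantile \<mu> t\<bar> powr r)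
          = integral\<^sup>L Om (\<lambda>t. \<bar>e t - q t\<bar> powr r)"
        by (rule Bochner_Integration.integral_cong)
           (auto simp: space_restrict_space e_def q_def quantile_emp[OF xs])
      finally show ?thesis .
    qed
    moreover have "integral\<^sup>L Om (\<lambda>t. \<bar>e t - q t\<bar>) \<le> (integral\<^sup>L Om (\<lambda>t. \<bar>e t - q t\<bar> powr r)) powr (1 / r)"
    proof -
      define X where "X = integral\<^sup>L Om (\<lambda>t. \<bar>e t - q t\<bar>)"
      have X0: "0 \<le> X" unfolding X_def by (simp add: integral_nonneg_AE)
      have "X powr r \<le> integral\<^sup>L Om (\<lambda>t. \<bar>e t - q t\<bar> powr r)"
        unfolding X_def by (rule jensen_powr[OF r _ ints]) simp
      then have "(X powr r) powr (1 / r) \<le> (integral\<^sup>L Om (\<lambda>t. \<bar>e t - q t\<bar> powr r)) powr (1 / r)"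
        using r by (intro powr_mono2) auto
      moreover have "(X powr r) powr (1 / r) = X" using r X0 by (simp add: powr_powr)
      ultimately show ?thesis unfolding X_def by simp
    qed
    ultimately show ?thesis using ints(1) unfolding e_def by simp
  qed
  define c where "c = min t1 (1 - t2) * (q t2 - q t1) / 8"
  have c0: "c > 0" using t by (simp add: c_def)
  have pair: "c / (real n + 1) \<le> W a + W b"
    if ab: "0 < n" "sorted a" "length a = n" "sorted b" "length b = Suc n" for n a b
  proof -
    have sn: "real (Suc n) = real n + 1" by simp
    have A: "integrable Om (\<lambda>t. \<bar>a ! nat \<lfloor>real n * t\<rfloor> - q t\<bar>)"
        "integral\<^sup>L Om (\<lambda>t. \<bar>a ! nat \<lfloor>real n * t\<rfloor> - q t\<bar>) \<le> W a"
      using WD[OF ab(2,3,1)] by auto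
    have B: "integrable Om (\<lambda>t. \<bar>b ! nat \<lfloor>(real n + 1) * t\<rfloor> - q t\<bar>)"
        "integral\<^sup>L Om (\<lambda>t. \<bar>b ! nat \<lfloor>(real n + 1) * t\<rfloor> - q t\<bar>) \<le> W b"
      using WD[OF ab(4,5)] unfolding sn by auto
    have "c / (real n + 1) = min t1 (1 - t2) * (q t2 - q t1) / (8 * (real n + 1))"
      by (simp add: c_def)
    also have "\<dots> \<le> integral\<^sup>L Om (\<lambda>t. \<bar>a ! nat \<lfloor>real n * t\<rfloor> - q t\<bar>)
       + integral\<^sup>L Om (\<lambda>t. \<bar>b ! nat \<lfloor>(real n + 1) * t\<rfloor> - q t\<bar>)"
      by (rule key[OF ab(1,3,5,2,4) qm t A(1) B(1)])
    finally show ?thesis using A(2) B(2) by linarith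
  qed
  define S where "S n = {xs :: real list. length xs = n \<and> sorted xs}" for n :: nat
  have opt: "opt_quant_dist r n \<mu> = Inf (W ` S n)" for n
    unfolding opt_quant_dist_def W_def S_def ..
  have Sne: "S n \<noteq> {}" for n unfolding S_def by (auto intro!: exI[of _ "replicate n 0"])
  have opt2: "c / (real n + 1) \<le> opt_quant_dist r n \<mu> + opt_quant_dist r (Suc n) \<mu>" if "0 < n" for n
  proof -
    have "c / (real n + 1) - Inf (W ` S (Suc n)) \<le> W a" if "a \<in> S n" for a
    proof -
      have "c / (real n + 1) - W a \<le> Inf (W ` S (Suc n))"
      proof (rule cInf_greatest)
        show "W ` S (Suc n) \<noteq> {}" using Sne[of "Suc n"] by simp
        fix y assume "y \<in> W ` S (Suc n)"
        then obtain b where b: "b \<in> S (Suc n)" "y = W b" by blast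
        have "c / (real n + 1) \<le> W a + W b"
          using \<open>0 < n\<close> \<open>a \<in> S n\<close> b(1) unfolding S_def by (intro pair) auto
        then show "c / (real n + 1) - W a \<le> y" using b(2) by linarith
      qed
      then show ?thesis by linarith
    qed
    then have "c / (real n + 1) - Inf (W ` S (Suc n)) \<le> Inf (W ` S n)"
      using Sne[of n] by (intro cInf_greatest) auto
    then show ?thesis unfolding opt by linarith
  qed
  define u where "u n = ereal (real n * opt_quant_dist r n \<mu>)" for n
  have freq: "\<exists>m\<ge>N. ereal (c / 4) \<le> u m" for N
  proof -
    define n where "n = Suc N"
    have n0: "0 < n" and nN: "N \<le> n" by (auto simp: n_def)
    have n1: "real n \<ge> 1" using n0 by simp
    have cn: "0 < c / (real n + 1)" using c0 by simp
    show ?thesis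
    proof (cases "opt_quant_dist r n \<mu> \<ge> c / (2 * (real n + 1))")
      case True
      have "c / 4 \<le> real n * (c / (2 * (real n + 1)))"
        using n1 c0 by (simp add: field_simps)
      also have "\<dots> \<le> real n * opt_quant_dist r n \<mu>" using True by (intro mult_left_mono) auto
      finally show ?thesis using nN by (auto simp: u_def intro!: exI[of _ n])
    next
      case False
      then have o2: "c / (2 * (real n + 1)) \<le> opt_quant_dist r (Suc n) \<mu>"
        using opt2[OF n0] by (simp add: field_simps)
      have "c / 4 \<le> (real n + 1) * (c / (2 * (real n + 1)))"
        using n1 c0 by (simp add: field_simps)
      also have "\<dots> \<le> (real n + 1) * opt_quant_dist r (Suc n) \<mu>" using o2 by (intro mult_left_mono) auto
      finally have h: "c / 4 \<le> (real n + 1) * opt_quant_dist r (Suc n) \<mu>" .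
      have "ereal (c / 4) \<le> u (Suc n)" unfolding u_def using h by (simp add: add.commute)
      then show ?thesis using nN by (intro exI[of _ "Suc n"]) auto
    qed
  qed
  have "ereal (c / 4) \<le> limsup u"
    unfolding limsup_INF_SUP
  proof (rule INF_greatest)
    fix N :: nat
    obtain m where "m \<ge> N" "ereal (c / 4) \<le> u m" using freq by blast
    then show "ereal (c / 4) \<le> (SUP m\<in>{N..}. u m)" by (intro SUP_upper2[of m]) auto
  qed
  moreover have "0 < ereal (c / 4)" using c0 by simp
  ultimately show ?thesis unfolding u_def by (rule order.strict_trans2[rotated])
qed

end
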